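(* Let $\epsilon \in (0, 1/2]$ and consider the stochastic process $X_0 = 0$ and, for $t \ge 1$, $X_t = X_{t-1} + x_t - \left(\frac{1}{2} + \epsilon\cdot \mathrm{sgn}(X_{t-1})\right)$, where $x_1, x_2, \ldots$ are independent $\mathrm{Bernoulli}(1/2)$ random variables. Then for every integer $t \ge 0$ and every $\Delta \ge 0$, $\Pr[|X_t| \ge \Delta] \le e^{1/2}\cdot e^{-\epsilon\Delta}$.
   Context: $\mathrm{sgn}(0) = 0$, $\mathrm{sgn}(y)=1$ for $y>0$, $\mathrm{sgn}(y) = -1$ for $y<0$. *)

theory Defs
  imports "HOL-Probability.Probability"
begin

text \<open>The process X_0 = 0, X_t = X_{t-1} + x_t - (1/2 + eps * sgn X_{t-1}).
  Here x :: nat => 'a => real gives the coin x_t at outcome w (indices t >= 1).\<close>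
fun proc :: "real \<Rightarrow> (nat \<Rightarrow> 'a \<Rightarrow> real) \<Rightarrow> nat \<Rightarrow> 'a \<Rightarrow> real" where
  "proc eps x 0 w = 0"
| "proc eps x (Suc t) w =
     proc eps x t w + x (Suc t) w - (1/2 + eps * sgn (proc eps x t w))"

end

theory Submission
  imports Defs
begin

definition pf :: "real \<Rightarrow> nat \<Rightarrow> (nat \<Rightarrow> real) \<Rightarrow> real" where
  "pf eps t \<omega> = proc eps (\<lambda>i (_::unit). \<omega> i) t ()"

lemma proc_local:
  "(\<forall>i\<in>{1..t}. x i w = y i v) \<Longrightarrow> proc eps x t w = proc eps y t v"
  by (induction t) auto

lemma pf_Suc: "pf eps (Suc t) \<omega> = pf eps t \<omega> + \<omega> (Suc t) - (1/2 + eps * sgn (pf eps t \<omega>))"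
  by (simp add: pf_def)

lemma pf_meas: "{1..t} \<subseteq> I \<Longrightarrow> pf eps t \<in> borel_measurable (PiM I (\<lambda>_. borel))"
proof (induction t)
  case 0
  then show ?case by (simp add: pf_def)
next
  case (Suc t)
  then have I: "{1..t} \<subseteq> I" "Suc t \<in> I" by auto
  have m: "pf eps t \<in> borel_measurable (PiM I (\<lambda>_. borel))" using Suc.IH I by auto
  have c: "(\<lambda>\<omega>. \<omega> (Suc t)) \<in> borel_measurable (PiM I (\<lambda>_. borel))"
    using I(2) by (rule measurable_component_singleton)
  show ?case unfolding pf_Suc[abs_def] using m c by measurable
qed

lemma exp_two: 
  fixes e :: real assumes "0 < e" "e \<le> 1/2"
  shows "exp (e * (1/2 - e)) + exp (- (e * (1/2 + e))) \<le> 2"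
proof -
  define d where "d = e * (1/2 - e)"
  define s where "s = e * (1/2 + e)"
  have "e * (1/2 - e) \<le> e * 1" using assms by (intro mult_left_mono) auto
  then have d1: "d \<le> 1" using assms unfolding d_def by linarith
  have d: "0 \<le> d" "d \<le> 1" using assms d1 unfolding d_def
    by (auto intro!: mult_nonneg_nonneg)
  have s: "0 \<le> s" using assms unfolding s_def by auto
  have 1: "exp d \<le> 1 + d + d^2" using exp_bound d by auto
  have "exp (-s) = inverse (exp s)" by (simp add: exp_minus)
  also have "\<dots> \<le> inverse (1 + s)" using s by (intro le_imp_inverse_le) auto
  also have "\<dots> \<le> 1 - s + s^2"
  proof -
    have "1 \<le> (1 + s) * (1 - s + s^2)" using s by (simp add: algebra_simps power2_eq_square power3_eq_cube)
    then show ?thesis using s by (simp add: field_simps)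
  qed
  finally have 2: "exp (-s) \<le> 1 - s + s^2" .
  have eq: "d + d^2 - s + s^2 = e^2 * (2 * e^2 - 3/2)"
    unfolding d_def s_def by (simp add: power2_eq_square algebra_simps)
  have "e^2 \<le> 1/4" using assms mult_mono[of e "1/2" e "1/2"] by (simp add: power2_eq_square)
  then have "d + d^2 - s + s^2 \<le> 0" unfolding eq by (intro mult_nonneg_nonpos) auto
  then show ?thesis using 1 2 unfolding d_def s_def by linarith
qed

lemma (in prob_space) indep_var_prob:
  assumes "indep_var borel F borel G" "A \<in> sets borel" "B \<in> sets borel"
  shows "prob ({w\<in>space M. F w \<in> A} \<inter> {w\<in>space M. G w \<in> B})
       = prob {w\<in>space M. F w \<in> A} * prob {w\<in>space M. G w \<in> B}"
proof -
  have "indep_set (sigma_sets (space M) { F -` A \<inter> space M | A. A \<in> sets borel})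
      (sigma_sets (space M) { G -` A \<inter> space M | A. A \<in> sets borel})"
    using assms(1) unfolding indep_var_eq by auto
  moreover have "F -` A \<inter> space M \<in> sigma_sets (space M) { F -` A \<inter> space M | A. A \<in> sets borel}"
    using assms(2) by (intro sigma_sets.Basic) auto
  moreover have "G -` B \<inter> space M \<in> sigma_sets (space M) { G -` A \<inter> space M | A. A \<in> sets borel}"
    using assms(3) by (intro sigma_sets.Basic) auto
  ultimately have "prob ((F -` A \<inter> space M) \<inter> (G -` B \<inter> space M)) = prob (F -` A \<inter> space M) * prob (G -` B \<inter> space M)"
    unfolding indep_sets2_eq by blast
  moreover have "{w\<in>space M. F w \<in> A} = F -` A \<inter> space M" "{w\<in>space M. G w \<in> B} = G -` B \<inter> space M" by auto
  ultimately show ?thesis by simp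
qed

theorem lemma7:
  fixes M :: "'a measure" and x :: "nat \<Rightarrow> 'a \<Rightarrow> real"
    and eps :: real and t :: nat and \<Delta> :: real
  assumes "prob_space M"
    and "prob_space.indep_vars M (\<lambda>_. borel) x {1..}"
    and "\<And>i. i \<ge> 1 \<Longrightarrow> x i \<in> borel_measurable M"
    and "\<And>i. i \<ge> 1 \<Longrightarrow> AE w in M. x i w \<in> {0, 1}"
    and "\<And>i. i \<ge> 1 \<Longrightarrow> measure M {w \<in> space M. x i w = 1} = 1/2"
    and "0 < eps" and "eps \<le> 1/2"
    and "\<Delta> \<ge> 0"
  shows "measure M {w \<in> space M. \<bar>proc eps x t w\<bar> \<ge> \<Delta>}
           \<le> exp (1/2) * exp (- eps * \<Delta>)"
proof -
  interpret P: prob_space M by fact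
  define K where "K = exp (1/2::real)"
  have K1: "1 \<le> K" unfolding K_def by simp
  have indep_t: "P.indep_var borel (proc eps x t) borel (x (Suc t))" for t
  proof -
    have "P.indep_var (PiM {1..t} (\<lambda>_. borel)) (\<lambda>w. restrict (\<lambda>i. x i w) {1..t})
       (PiM {Suc t} (\<lambda>_. borel)) (\<lambda>w. restrict (\<lambda>i. x i w) {Suc t})"
      by (rule P.indep_var_restrict[OF assms(2)]) auto
    then have "P.indep_var borel (pf eps t \<circ> (\<lambda>w. restrict (\<lambda>i. x i w) {1..t}))
       borel ((\<lambda>\<omega>. \<omega> (Suc t)) \<circ> (\<lambda>w. restrict (\<lambda>i. x i w) {Suc t}))"
      by (rule P.indep_var_compose) (auto intro: pf_meas measurable_component_singleton)
    moreover have "pf eps t \<circ> (\<lambda>w. restrict (\<lambda>i. x i w) {1..t}) = proc eps x t"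
      by (auto simp: pf_def fun_eq_iff intro!: proc_local)
    moreover have "(\<lambda>\<omega>. \<omega> (Suc t)) \<circ> (\<lambda>w. restrict (\<lambda>i. x i w) {Suc t}) = x (Suc t)"
      by auto
    ultimately show ?thesis by simp
  qed
  have meas: "proc eps x t \<in> borel_measurable M" for t
  proof (induction t)
    case 0
    then show ?case by simp
  next
    case (Suc t)
    have c: "x (Suc t) \<in> borel_measurable M" using assms(3) by simp
    have "proc eps x (Suc t) = (\<lambda>w. proc eps x t w + x (Suc t) w - (1/2 + eps * sgn (proc eps x t w)))"
      by auto
    then show ?case using Suc.IH c by simp
  qed
  have c0: "P.prob {w\<in>space M. x (Suc t) w = 0} = 1/2" for t
  proof -
    have c: "x (Suc t) \<in> borel_measurable M" using assms(3) by simp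
    have "P.prob {w\<in>space M. x (Suc t) w = 0} = P.prob (space M - {w\<in>space M. x (Suc t) w = 1})"
      using assms(4)[of "Suc t"] c by (intro P.finite_measure_eq_AE) (auto elim!: eventually_mono)
    also have "\<dots> = 1 - 1/2" using assms(5)[of "Suc t"] c by (subst P.prob_compl) auto
    finally show ?thesis by simp
  qed
  have main: "\<forall>\<Delta>. P.prob {w\<in>space M. \<Delta> \<le> \<bar>proc eps x t w\<bar>} \<le> K * exp (- eps * \<Delta>)"
  proof (induction t)
    case 0
    show ?case
    proof
      fix \<Delta> :: real
      show "P.prob {w\<in>space M. \<Delta> \<le> \<bar>proc eps x 0 w\<bar>} \<le> K * exp (- eps * \<Delta>)"
      proof (cases "\<Delta> \<le> 0")
        case True
        then have "1 \<le> exp (- eps * \<Delta>)" using assms(6) by (simp add: mult_nonneg_nonpos)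
        moreover have "0 < K" unfolding K_def by simp
        ultimately have "K * 1 \<le> K * exp (- eps * \<Delta>)" by (intro mult_left_mono) auto
        then have "1 \<le> K * exp (- eps * \<Delta>)" using K1 by linarith
        then show ?thesis using P.prob_le_1 order_trans by blast
      next
        case False
        then show ?thesis unfolding K_def by simp
      qed
    qed
  next
    case (Suc t)
    show ?case
    proof
      fix \<Delta> :: real
      show "P.prob {w\<in>space M. \<Delta> \<le> \<bar>proc eps x (Suc t) w\<bar>} \<le> K * exp (- eps * \<Delta>)"
      proof (cases "1 \<le> K * exp (- eps * \<Delta>)")
        case True
        then show ?thesis using P.prob_le_1 order_trans by blast
      next
        case False
        then have "exp (1/2 - eps * \<Delta>) < 1" unfolding K_def by (simp add: exp_add[symmetric])
        then have ed: "1/2 < eps * \<Delta>" by simp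
        have D1: "1 < \<Delta>"
        proof (rule ccontr)
          assume "\<not> 1 < \<Delta>"
          then have "eps * \<Delta> \<le> eps * 1" using assms(6) by (intro mult_left_mono) auto
          then show False using ed assms(7) by simp
        qed
        define a where "a = \<Delta> - (1/2 - eps)"
        define b where "b = \<Delta> + (1/2 + eps)"
        have a0: "0 < a" using D1 assms(6,7) unfolding a_def by simp
        have b0: "0 < b" using D1 assms(6,7) unfolding b_def by simp
        define X where "X = proc eps x t"
        define c where "c = x (Suc t)"
        have Xm[measurable]: "X \<in> borel_measurable M" unfolding X_def by (rule meas)
        have cm[measurable]: "c \<in> borel_measurable M" unfolding c_def using assms(3) by simp
        have cAE: "AE w in M. x (Suc t) w \<in> {0, 1}" using assms(4) by simp
        have ind: "P.indep_var borel X borel c" unfolding X_def c_def by (rule indep_t)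
        define S1 where "S1 = {w\<in>space M. X w \<in> {a..}} \<inter> {w\<in>space M. c w \<in> {1}}"
        define S2 where "S2 = {w\<in>space M. X w \<in> {..-a}} \<inter> {w\<in>space M. c w \<in> {0}}"
        define S3 where "S3 = {w\<in>space M. X w \<in> {b..}} \<inter> {w\<in>space M. c w \<in> {0}}"
        define S4 where "S4 = {w\<in>space M. X w \<in> {..-b}} \<inter> {w\<in>space M. c w \<in> {1}}"
        have S[measurable]: "S1 \<in> sets M" "S2 \<in> sets M" "S3 \<in> sets M" "S4 \<in> sets M"
          unfolding S1_def S2_def S3_def S4_def by measurable
        have pc1: "P.prob {w\<in>space M. c w = 1} = 1/2" using assms(5)[of "Suc t"] unfolding c_def by simp
        have pc0: "P.prob {w\<in>space M. c w = 0} = 1/2" using c0[of t] unfolding c_def by simp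
        have p1: "P.prob S1 = P.prob {w\<in>space M. X w \<in> {a..}} / 2"
          unfolding S1_def by (subst P.indep_var_prob[OF ind]) (auto simp: pc1)
        have p2: "P.prob S2 = P.prob {w\<in>space M. X w \<in> {..-a}} / 2"
          unfolding S2_def by (subst P.indep_var_prob[OF ind]) (auto simp: pc0)
        have p3: "P.prob S3 = P.prob {w\<in>space M. X w \<in> {b..}} / 2"
          unfolding S3_def by (subst P.indep_var_prob[OF ind]) (auto simp: pc0)
        have p4: "P.prob S4 = P.prob {w\<in>space M. X w \<in> {..-b}} / 2"
          unfolding S4_def by (subst P.indep_var_prob[OF ind]) (auto simp: pc1)
        have split: "P.prob {w\<in>space M. X w \<in> {r..}} + P.prob {w\<in>space M. X w \<in> {..-r}}
            = P.prob {w\<in>space M. r \<le> \<bar>proc eps x t w\<bar>}" if "0 < r" for r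
        proof -
          have "{w\<in>space M. r \<le> \<bar>proc eps x t w\<bar>} = {w\<in>space M. X w \<in> {r..}} \<union> {w\<in>space M. X w \<in> {..-r}}"
            unfolding X_def by auto
          moreover have "P.prob ({w\<in>space M. X w \<in> {r..}} \<union> {w\<in>space M. X w \<in> {..-r}})
             = P.prob {w\<in>space M. X w \<in> {r..}} + P.prob {w\<in>space M. X w \<in> {..-r}}"
            using that by (intro P.finite_measure_Union) auto
          ultimately show ?thesis by simp
        qed
        have "P.prob {w\<in>space M. \<Delta> \<le> \<bar>proc eps x (Suc t) w\<bar>} \<le> P.prob (S1 \<union> S2 \<union> S3 \<union> S4)"
        proof (rule P.finite_measure_mono_AE)
          show "S1 \<union> S2 \<union> S3 \<union> S4 \<in> sets M" by measurable
          show "AE w in M. w \<in> {w\<in>space M. \<Delta> \<le> \<bar>proc eps x (Suc t) w\<bar>} \<longrightarrow> w \<in> S1 \<union> S2 \<union> S3 \<union> S4"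
            using cAE
          proof (rule eventually_mono)
            fix w assume cw: "x (Suc t) w \<in> {0, 1}"
            show "w \<in> {w\<in>space M. \<Delta> \<le> \<bar>proc eps x (Suc t) w\<bar>} \<longrightarrow> w \<in> S1 \<union> S2 \<union> S3 \<union> S4"
            proof
              assume w: "w \<in> {w\<in>space M. \<Delta> \<le> \<bar>proc eps x (Suc t) w\<bar>}"
              then have sp: "w \<in> space M" and h: "\<Delta> \<le> \<bar>X w + c w - (1/2 + eps * sgn (X w))\<bar>"
                unfolding X_def c_def by auto
              consider "X w = 0" | "X w > 0" | "X w < 0" by linarith
              then show "w \<in> S1 \<union> S2 \<union> S3 \<union> S4"
              proof cases
                case 1
                then show ?thesis using h cw D1 unfolding c_def by auto
              next
                case 2
                then have "sgn (X w) = 1" by simp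
                then show ?thesis using h cw D1 sp 2 assms(6,7)
                  unfolding S1_def S2_def S3_def S4_def a_def b_def c_def by (auto simp: abs_if split: if_splits)
              next
                case 3
                then have "sgn (X w) = -1" by simp
                then show ?thesis using h cw D1 sp 3 assms(6,7)
                  unfolding S1_def S2_def S3_def S4_def a_def b_def c_def by (auto simp: abs_if split: if_splits)
              qed
            qed
          qed
        qed
        also have "\<dots> \<le> P.prob S1 + P.prob S2 + P.prob S3 + P.prob S4"
        proof -
          have u: "S1 \<union> S2 \<in> sets M" "S1 \<union> S2 \<union> S3 \<in> sets M" using S by auto
          show ?thesis using measure_Un_le[OF u(2) S(4)] measure_Un_le[OF u(1) S(3)]
              measure_Un_le[OF S(1) S(2)] by linarith
        qed
        also have "\<dots> = (P.prob {w\<in>space M. a \<le> \<bar>proc eps x t w\<bar>} + P.prob {w\<in>space M. b \<le> \<bar>proc eps x t w\<bar>}) / 2"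
          using split[OF a0] split[OF b0] p1 p2 p3 p4 by simp
        also have "\<dots> \<le> (K * exp (- eps * a) + K * exp (- eps * b)) / 2"
          using Suc.IH by (intro divide_right_mono add_mono) auto
        also have "\<dots> = K * exp (- eps * \<Delta>) * (exp (eps * (1/2 - eps)) + exp (- (eps * (1/2 + eps)))) / 2"
          unfolding a_def b_def by (simp add: algebra_simps flip: exp_add)
        also have "\<dots> \<le> K * exp (- eps * \<Delta>) * 2 / 2"
          using exp_two[OF assms(6,7)] K1 by (intro divide_right_mono mult_left_mono) auto
        finally show ?thesis by simp
      qed
    qed
  qed
  then show ?thesis unfolding K_def by auto
qed

end
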